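(* Let $G=K_{r_1,\dots,r_k}$ with partition sets $X_1,\dots,X_k$, $|X_i|=r_i$. Suppose $H$ is a good bisection of $G$ with partition sets $V_1,V_2$. Then for each $i\in[k]$: (i) if $X_i$ crosses $H$ and $|\overline{X_i}|$ is even, then $|\overline{X_i}\cap V_1|=|\overline{X_i}\cap V_2|$ and $\big||X_i\cap V_1|-|X_i\cap V_2|\big|\le 1$; (ii) if $X_i$ crosses $H$ and $|\overline{X_i}|$ is odd, then $\big||\overline{X_i}\cap V_1|-|\overline{X_i}\cap V_2|\big|=1$ and $\big||X_i\cap V_1|-|X_i\cap V_2|\big|\le 2$.
   Context: A bisection of a graph $G$ is a bipartite spanning subgraph $H$ of $G$ with partition sets $V_1,V_2$ (every edge of $H$ joins $V_1$ and $V_2$) with $||V_1|-|V_2||\le 1$. It is good if $2d_H(v)\ge d_G(v)-1$ for every $v\in V(G)$. For $W\subseteq V(G)$, $\overline{W}=V(G)\setminus W$. A partition set $X_i$ crosses $H$ if $X_i\cap V_1\neq\emptyset$ and $X_i\cap V_2\ne\emptyset$. *)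

theory Defs
  imports Main
begin

definition deg :: "'a set \<Rightarrow> ('a \<Rightarrow> 'a \<Rightarrow> bool) \<Rightarrow> 'a \<Rightarrow> nat" where
  "deg V E v = card {u \<in> V. E v u}"

text \<open>G = K_{r_1,...,r_k} on vertex set V with partition sets X 0, ..., X (k-1)
  (indices shifted to 0..k-1), |X i| = r_i \<ge> 1.\<close>
definition complete_multipartite ::
  "'a set \<Rightarrow> ('a \<Rightarrow> 'a \<Rightarrow> bool) \<Rightarrow> nat \<Rightarrow> (nat \<Rightarrow> 'a set) \<Rightarrow> bool" where
  "complete_multipartite V E k X \<longleftrightarrow>
     finite V \<and> (\<forall>i<k. X i \<noteq> {}) \<and>
     (\<forall>i<k. \<forall>j<k. i \<noteq> j \<longrightarrow> X i \<inter> X j = {}) \<and>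
     (\<Union>i<k. X i) = V \<and>
     (\<forall>u v. E u v \<longleftrightarrow> u \<in> V \<and> v \<in> V \<and> (\<exists>i<k. \<exists>j<k. i \<noteq> j \<and> u \<in> X i \<and> v \<in> X j))"

definition bisection ::
  "'a set \<Rightarrow> ('a \<Rightarrow> 'a \<Rightarrow> bool) \<Rightarrow> ('a \<Rightarrow> 'a \<Rightarrow> bool) \<Rightarrow> 'a set \<Rightarrow> 'a set \<Rightarrow> bool" where
  "bisection V E EH V1 V2 \<longleftrightarrow>
     (\<forall>u v. EH u v \<longrightarrow> E u v) \<and> (\<forall>u v. EH u v \<longleftrightarrow> EH v u) \<and>
     V1 \<union> V2 = V \<and> V1 \<inter> V2 = {} \<and>
     (\<forall>u v. EH u v \<longrightarrow> (u \<in> V1 \<and> v \<in> V2) \<or> (u \<in> V2 \<and> v \<in> V1)) \<and>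
     \<bar>int (card V1) - int (card V2)\<bar> \<le> 1"

definition good_bisection ::
  "'a set \<Rightarrow> ('a \<Rightarrow> 'a \<Rightarrow> bool) \<Rightarrow> ('a \<Rightarrow> 'a \<Rightarrow> bool) \<Rightarrow> 'a set \<Rightarrow> 'a set \<Rightarrow> bool" where
  "good_bisection V E EH V1 V2 \<longleftrightarrow>
     bisection V E EH V1 V2 \<and>
     (\<forall>v \<in> V. 2 * int (deg V EH v) \<ge> int (deg V E v) - 1)"

definition crosses :: "'a set \<Rightarrow> 'a set \<Rightarrow> 'a set \<Rightarrow> bool" where
  "crosses Xi V1 V2 \<longleftrightarrow> Xi \<inter> V1 \<noteq> {} \<and> Xi \<inter> V2 \<noteq> {}"

end

theory Submission
  imports Defs
begin
lemma h1: fixes c d m :: nat assumes "int (c+d) - 1 \<le> 2 * int d" "int (c+d) - 1 \<le> 2 * int c" "c + d = 2*m" shows "c = d"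
proof -
  have "c \<le> d + 1" "d \<le> c + 1" using assms(1,2) by linarith+
  then show ?thesis using assms(3) by presburger
qed
lemma h2: fixes c d m :: nat assumes "int (c+d) - 1 \<le> 2 * int d" "int (c+d) - 1 \<le> 2 * int c" "c + d = 2*m+1" shows "\<bar>int c - int d\<bar> = 1"
proof -
  have "c \<le> d + 1" "d \<le> c + 1" using assms(1,2) by linarith+
  then have "c \<noteq> d" using assms(3) by presburger
  then show ?thesis using \<open>c \<le> d + 1\<close> \<open>d \<le> c + 1\<close> by linarith
qed

theorem lemma3p1:
  fixes V :: "'a set" and E EH :: "'a \<Rightarrow> 'a \<Rightarrow> bool" and k :: nat
    and X :: "nat \<Rightarrow> 'a set" and V1 V2 :: "'a set"
  assumes "complete_multipartite V E k X"
    and "good_bisection V E EH V1 V2"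
    and "i < k"
  shows "(crosses (X i) V1 V2 \<and> even (card (V - X i)) \<longrightarrow>
            card ((V - X i) \<inter> V1) = card ((V - X i) \<inter> V2) \<and>
            \<bar>int (card (X i \<inter> V1)) - int (card (X i \<inter> V2))\<bar> \<le> 1)
       \<and> (crosses (X i) V1 V2 \<and> odd (card (V - X i)) \<longrightarrow>
            \<bar>int (card ((V - X i) \<inter> V1)) - int (card ((V - X i) \<inter> V2))\<bar> = 1 \<and>
            \<bar>int (card (X i \<inter> V1)) - int (card (X i \<inter> V2))\<bar> \<le> 2)"
proof -
  note cm = assms(1)[unfolded complete_multipartite_def]
  note gb = assms(2)[unfolded good_bisection_def bisection_def]
  have fin: "finite V" using cm by blast
  have XV: "X i \<subseteq> V" using cm assms(3) by blast
  have disj: "\<And>j. j < k \<Longrightarrow> j \<noteq> i \<Longrightarrow> X i \<inter> X j = {}" using cm assms(3) by blast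
  have EV: "\<And>u v. E u v \<longleftrightarrow> u \<in> V \<and> v \<in> V \<and> (\<exists>i<k. \<exists>j<k. i \<noteq> j \<and> u \<in> X i \<and> v \<in> X j)"
    using cm by blast
  have UV: "(\<Union>i<k. X i) = V" using cm by blast
  have V12: "V1 \<union> V2 = V" "V1 \<inter> V2 = {}" using gb by blast+
  have EHE: "\<And>u v. EH u v \<Longrightarrow> E u v" using gb by blast
  have EHside: "\<And>u v. EH u v \<Longrightarrow> (u \<in> V1 \<and> v \<in> V2) \<or> (u \<in> V2 \<and> v \<in> V1)" using gb by blast
  have bal: "\<bar>int (card V1) - int (card V2)\<bar> \<le> 1" using gb by blast
  have good: "\<And>v. v \<in> V \<Longrightarrow> 2 * int (deg V EH v) \<ge> int (deg V E v) - 1" using gb by blast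
  have nbr: "\<And>v u. v \<in> X i \<Longrightarrow> E v u \<Longrightarrow> u \<in> V - X i"
  proof -
    fix v u assume v: "v \<in> X i" and e: "E v u"
    then obtain a b where ab: "a < k" "b < k" "a \<noteq> b" "v \<in> X a" "u \<in> X b" "u \<in> V"
      using EV by blast
    have "a = i" using disj[of a] ab v by (cases "a = i") auto
    then have "u \<notin> X i" using disj[of b] ab by blast
    then show "u \<in> V - X i" using ab by blast
  qed
  have degE: "\<And>v. v \<in> X i \<Longrightarrow> deg V E v = card (V - X i)"
  proof -
    fix v assume v: "v \<in> X i"
    have "{u \<in> V. E v u} = V - X i"
    proof
      show "{u \<in> V. E v u} \<subseteq> V - X i" using nbr v by blast
      show "V - X i \<subseteq> {u \<in> V. E v u}"
      proof
        fix u assume u: "u \<in> V - X i"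
        then obtain j where "j < k" "u \<in> X j" using UV by blast
        moreover have "j \<noteq> i" using u calculation by blast
        ultimately show "u \<in> {u \<in> V. E v u}" using EV v u XV assms(3) by blast
      qed
    qed
    then show "deg V E v = card (V - X i)" by (simp add: deg_def)
  qed
  have dA: "\<And>v. v \<in> X i \<inter> V1 \<Longrightarrow> deg V EH v \<le> card ((V - X i) \<inter> V2)"
  proof -
    fix v assume v: "v \<in> X i \<inter> V1"
    have "{u \<in> V. EH v u} \<subseteq> (V - X i) \<inter> V2"
      using nbr EHE EHside v V12(2) by blast
    then show "deg V EH v \<le> card ((V - X i) \<inter> V2)" unfolding deg_def
      by (meson card_mono fin finite_Diff finite_Int)
  qed
  have dB: "\<And>v. v \<in> X i \<inter> V2 \<Longrightarrow> deg V EH v \<le> card ((V - X i) \<inter> V1)"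
  proof -
    fix v assume v: "v \<in> X i \<inter> V2"
    have "{u \<in> V. EH v u} \<subseteq> (V - X i) \<inter> V1"
      using nbr EHE EHside v V12(2) by blast
    then show "deg V EH v \<le> card ((V - X i) \<inter> V1)" unfolding deg_def
      by (meson card_mono fin finite_Diff finite_Int)
  qed
  have cV1: "card V1 = card (X i \<inter> V1) + card ((V - X i) \<inter> V1)"
  proof -
    have "V1 = (X i \<inter> V1) \<union> ((V - X i) \<inter> V1)" using V12 by blast
    moreover have "finite V1" using V12 fin by (metis finite_Un)
    ultimately show ?thesis by (metis Diff_disjoint Int_Diff Int_commute card_Un_disjoint finite_Int inf_assoc)
  qed
  have cV2: "card V2 = card (X i \<inter> V2) + card ((V - X i) \<inter> V2)"
  proof -
    have "V2 = (X i \<inter> V2) \<union> ((V - X i) \<inter> V2)" using V12 by blast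
    moreover have "finite V2" using V12 fin by (metis finite_Un)
    ultimately show ?thesis by (metis Diff_disjoint Int_Diff Int_commute card_Un_disjoint finite_Int inf_assoc)
  qed
  have cX: "card (V - X i) = card ((V - X i) \<inter> V1) + card ((V - X i) \<inter> V2)"
  proof -
    have "V - X i = ((V - X i) \<inter> V1) \<union> ((V - X i) \<inter> V2)" using V12 by blast
    moreover have "((V - X i) \<inter> V1) \<inter> ((V - X i) \<inter> V2) = {}" using V12 by blast
    ultimately show ?thesis using fin by (metis card_Un_disjoint finite_Diff finite_Int)
  qed
  show ?thesis
  proof (intro conjI impI; elim conjE)
    assume cr: "crosses (X i) V1 V2"
    then obtain a b where a: "a \<in> X i \<inter> V1" and b: "b \<in> X i \<inter> V2" unfolding crosses_def by blast
    have 1: "2 * int (card ((V - X i) \<inter> V2)) \<ge> int (card (V - X i)) - 1"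
      using good[of a] dA[OF a] degE[of a] a XV by force
    have 2: "2 * int (card ((V - X i) \<inter> V1)) \<ge> int (card (V - X i)) - 1"
      using good[of b] dB[OF b] degE[of b] b XV by force
    {
      assume "even (card (V - X i))"
      then obtain m where m: "card (V - X i) = 2 * m" by blast
      show eq: "card ((V - X i) \<inter> V1) = card ((V - X i) \<inter> V2)" using h1 1 2 cX m by metis
      show "\<bar>int (card (X i \<inter> V1)) - int (card (X i \<inter> V2))\<bar> \<le> 1"
        using eq cV1 cV2 bal by linarith
    }
    {
      assume "odd (card (V - X i))"
      then obtain m where m: "card (V - X i) = 2 * m + 1" using oddE by blast
      show "\<bar>int (card ((V - X i) \<inter> V1)) - int (card ((V - X i) \<inter> V2))\<bar> = 1"
        using h2 1 2 cX m by metis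
      then show "\<bar>int (card (X i \<inter> V1)) - int (card (X i \<inter> V2))\<bar> \<le> 2"
        using cV1 cV2 bal by linarith
    }
  qed
qed

end
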